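(* Let $\mathsf V$ be a variety, $h:\mathbf F_{\mathsf V}(z)\to\prod_{k=1}^m\mathbf E_k$ an algebraic e-generalization problem, and $\theta$ a congruence of $\mathbf F_{\mathsf V}(z)$. Then: (1) if $\theta\in\mathscr G(h)$, then $\theta$ is exact and $\theta\subseteq\ker(h)$; (2) if $\theta$ is projective and $\theta\subseteq\ker(h)$, then $\theta\in\mathscr G(h)$.
   Context: $\mathbf F_{\mathsf V}(z)$ is the free algebra of the variety $\mathsf V$ on one generator $z$. An algebra is projective in $\mathsf V$ iff it is a retract of a free algebra of $\mathsf V$ (there are homomorphisms $i:\mathbf P\to\mathbf F_{\mathsf V}(Y)$, $j:\mathbf F_{\mathsf V}(Y)\to\mathbf P$ with $j\circ i=\mathrm{id}$); it is exact in $\mathsf V$ if isomorphic to a finitely generated subalgebra of a finitely generated free algebra of $\mathsf V$. A congruence $\theta$ of $\mathbf F_{\mathsf V}(z)$ is exact (resp. projective) if $\mathbf F_{\mathsf V}(z)/\theta$ is exact (resp. projective) in $\mathsf V$. An algebraic e-generalization problem is a homomorphism $h:\mathbf F_{\mathsf V}(z)\to\prod_{k=1}^m\mathbf E_k$ with each $\mathbf E_k$ a 1-generated exact algebra and $p_k\circ h$ surjective for each projection $p_k$. A solution of $h$ is a homomorphism $g:\mathbf F_{\mathsf V}(z)\to\mathbf P$ with $\mathbf P$ finitely generated and projective in $\mathsf V$ such that $f\circ g=h$ for some homomorphism $f:\mathbf P\to\prod_k\mathbf E_k$. $\ker(g)=\{(a,a'):g(a)=g(a')\}$. $\mathscr G(h)$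 is the set of G-congruences of $h$, i.e. $\{\ker(g): g \text{ a solution of } h\}$. *)

theory Defs
  imports Main
begin

record ('f, 'a) alg =
  carrier :: "'a set"
  ops :: "'f \<Rightarrow> 'a list \<Rightarrow> 'a"

definition algebra :: "('f \<Rightarrow> nat) \<Rightarrow> ('f, 'a) alg \<Rightarrow> bool" where
  "algebra ar A \<longleftrightarrow>
     (\<forall>f xs. length xs = ar f \<and> set xs \<subseteq> carrier A \<longrightarrow> ops A f xs \<in> carrier A)"

definition hom :: "('f \<Rightarrow> nat) \<Rightarrow> ('f, 'a) alg \<Rightarrow> ('f, 'b) alg \<Rightarrow> ('a \<Rightarrow> 'b) \<Rightarrow> bool" where
  "hom ar A B h \<longleftrightarrow>
     (\<forall>x\<in>carrier A. h x \<in> carrier B) \<and>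
     (\<forall>f xs. length xs = ar f \<and> set xs \<subseteq> carrier A \<longrightarrow> h (ops A f xs) = ops B f (map h xs))"

definition iso :: "('f \<Rightarrow> nat) \<Rightarrow> ('f, 'a) alg \<Rightarrow> ('f, 'b) alg \<Rightarrow> bool" where
  "iso ar A B \<longleftrightarrow> (\<exists>\<phi>. hom ar A B \<phi> \<and> bij_betw \<phi> (carrier A) (carrier B))"

definition closed :: "('f \<Rightarrow> nat) \<Rightarrow> ('f, 'a) alg \<Rightarrow> 'a set \<Rightarrow> bool" where
  "closed ar A S \<longleftrightarrow> (\<forall>f xs. length xs = ar f \<and> set xs \<subseteq> S \<longrightarrow> ops A f xs \<in> S)"

definition Sg :: "('f \<Rightarrow> nat) \<Rightarrow> ('f, 'a) alg \<Rightarrow> 'a set \<Rightarrow> 'a set" where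
  "Sg ar A X = \<Inter>{S. X \<subseteq> S \<and> S \<subseteq> carrier A \<and> closed ar A S}"

definition subalg :: "('f, 'a) alg \<Rightarrow> 'a set \<Rightarrow> ('f, 'a) alg" where
  "subalg A S = \<lparr>carrier = S, ops = ops A\<rparr>"

definition fin_gen :: "('f \<Rightarrow> nat) \<Rightarrow> ('f, 'a) alg \<Rightarrow> bool" where
  "fin_gen ar A \<longleftrightarrow> (\<exists>X. finite X \<and> X \<subseteq> carrier A \<and> Sg ar A X = carrier A)"

definition one_gen :: "('f \<Rightarrow> nat) \<Rightarrow> ('f, 'a) alg \<Rightarrow> bool" where
  "one_gen ar A \<longleftrightarrow> (\<exists>a\<in>carrier A. Sg ar A {a} = carrier A)"

definition congruence :: "('f \<Rightarrow> nat) \<Rightarrow> ('f, 'a) alg \<Rightarrow> ('a \<times> 'a) set \<Rightarrow> bool" where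
  "congruence ar A \<theta> \<longleftrightarrow> equiv (carrier A) \<theta> \<and>
     (\<forall>f xs ys. length xs = ar f \<and> list_all2 (\<lambda>x y. (x, y) \<in> \<theta>) xs ys
        \<longrightarrow> (ops A f xs, ops A f ys) \<in> \<theta>)"

definition quot_alg :: "('f, 'a) alg \<Rightarrow> ('a \<times> 'a) set \<Rightarrow> ('f, 'a set) alg" where
  "quot_alg A \<theta> = \<lparr>carrier = carrier A // \<theta>,
     ops = (\<lambda>f Xs. \<theta> `` {ops A f (map (\<lambda>X. SOME x. x \<in> X) Xs)})\<rparr>"

definition ker :: "('f, 'a) alg \<Rightarrow> ('a \<Rightarrow> 'b) \<Rightarrow> ('a \<times> 'a) set" where
  "ker A g = {(a, a'). a \<in> carrier A \<and> a' \<in> carrier A \<and> g a = g a'}"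

text \<open>Product of the algebras E 0, ..., E (m-1) (indices shifted from 1..m to 0..m-1),
  with extensional tuples.\<close>
definition prod_alg :: "nat \<Rightarrow> (nat \<Rightarrow> ('f, 'e) alg) \<Rightarrow> ('f, nat \<Rightarrow> 'e) alg" where
  "prod_alg m E = \<lparr>carrier = {x. (\<forall>k<m. x k \<in> carrier (E k)) \<and> (\<forall>k\<ge>m. x k = undefined)},
     ops = (\<lambda>f xs k. if k < m then ops (E k) f (map (\<lambda>x. x k) xs) else undefined)\<rparr>"

datatype ('f, 'v) trm = Var 'v | Fn 'f "('f, 'v) trm list"

fun wf_trm :: "('f \<Rightarrow> nat) \<Rightarrow> ('f, 'v) trm \<Rightarrow> bool" where
  "wf_trm ar (Var v) = True"
| "wf_trm ar (Fn f ts) = (length ts = ar f \<and> (\<forall>t\<in>set ts. wf_trm ar t))"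

fun vars :: "('f, 'v) trm \<Rightarrow> 'v set" where
  "vars (Var v) = {v}"
| "vars (Fn f ts) = (\<Union>t\<in>set ts. vars t)"

fun subst :: "('v \<Rightarrow> ('f, 'w) trm) \<Rightarrow> ('f, 'v) trm \<Rightarrow> ('f, 'w) trm" where
  "subst \<sigma> (Var v) = \<sigma> v"
| "subst \<sigma> (Fn f ts) = Fn f (map (subst \<sigma>) ts)"

text \<open>A variety is given (Birkhoff) by a set of identities over the signature ar.\<close>
definition variety :: "('f \<Rightarrow> nat) \<Rightarrow> (('f, nat) trm \<times> ('f, nat) trm) set \<Rightarrow> bool" where
  "variety ar Eqs \<longleftrightarrow> (\<forall>(s, t)\<in>Eqs. wf_trm ar s \<and> wf_trm ar t)"

inductive eqcons :: "('f \<Rightarrow> nat) \<Rightarrow> (('f, nat) trm \<times> ('f, nat) trm) set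
    \<Rightarrow> ('f, 'v) trm \<Rightarrow> ('f, 'v) trm \<Rightarrow> bool"
  for ar Eqs where
  ax: "(s, t) \<in> Eqs \<Longrightarrow> (\<forall>v. wf_trm ar (\<sigma> v)) \<Longrightarrow> eqcons ar Eqs (subst \<sigma> s) (subst \<sigma> t)"
| refl: "wf_trm ar t \<Longrightarrow> eqcons ar Eqs t t"
| sym: "eqcons ar Eqs s t \<Longrightarrow> eqcons ar Eqs t s"
| trans: "eqcons ar Eqs s t \<Longrightarrow> eqcons ar Eqs t u \<Longrightarrow> eqcons ar Eqs s u"
| cong: "length ss = ar f \<Longrightarrow> list_all2 (eqcons ar Eqs) ss ts \<Longrightarrow> eqcons ar Eqs (Fn f ss) (Fn f ts)"

definition free_terms :: "('f \<Rightarrow> nat) \<Rightarrow> 'v set \<Rightarrow> ('f, 'v) trm set" where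
  "free_terms ar Y = {t. wf_trm ar t \<and> vars t \<subseteq> Y}"

definition fclass :: "('f \<Rightarrow> nat) \<Rightarrow> (('f, nat) trm \<times> ('f, nat) trm) set \<Rightarrow> 'v set
    \<Rightarrow> ('f, 'v) trm \<Rightarrow> ('f, 'v) trm set" where
  "fclass ar Eqs Y t = {s \<in> free_terms ar Y. eqcons ar Eqs s t}"

definition free_alg :: "('f \<Rightarrow> nat) \<Rightarrow> (('f, nat) trm \<times> ('f, nat) trm) set \<Rightarrow> 'v set
    \<Rightarrow> ('f, ('f, 'v) trm set) alg" where
  "free_alg ar Eqs Y = \<lparr>carrier = fclass ar Eqs Y ` free_terms ar Y,
     ops = (\<lambda>f cs. fclass ar Eqs Y (Fn f (map (\<lambda>c. SOME t. t \<in> c) cs)))\<rparr>"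

text \<open>F_V(z): free algebra on one generator (the unique element of type unit).\<close>
definition Fz :: "('f \<Rightarrow> nat) \<Rightarrow> (('f, nat) trm \<times> ('f, nat) trm) set \<Rightarrow> ('f, ('f, unit) trm set) alg" where
  "Fz ar Eqs = free_alg ar Eqs (UNIV :: unit set)"

definition exact :: "('f \<Rightarrow> nat) \<Rightarrow> (('f, nat) trm \<times> ('f, nat) trm) set \<Rightarrow> ('f, 'a) alg \<Rightarrow> bool" where
  "exact ar Eqs E \<longleftrightarrow> algebra ar E \<and>
     (\<exists>(Y :: nat set) X. finite Y \<and> finite X \<and> X \<subseteq> carrier (free_alg ar Eqs Y) \<and>
        iso ar E (subalg (free_alg ar Eqs Y) (Sg ar (free_alg ar Eqs Y) X)))"

text \<open>Retract of a free algebra; generators range over sets of the carrier type of P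
  (which suffices: a projective P is a retract of F_V(carrier P)).\<close>
definition projective :: "('f \<Rightarrow> nat) \<Rightarrow> (('f, nat) trm \<times> ('f, nat) trm) set \<Rightarrow> ('f, 'a) alg \<Rightarrow> bool" where
  "projective ar Eqs P \<longleftrightarrow> algebra ar P \<and>
     (\<exists>(Y :: 'a set) i j. hom ar P (free_alg ar Eqs Y) i \<and> hom ar (free_alg ar Eqs Y) P j \<and>
        (\<forall>x\<in>carrier P. j (i x) = x))"

definition exact_cong :: "('f \<Rightarrow> nat) \<Rightarrow> (('f, nat) trm \<times> ('f, nat) trm) set
    \<Rightarrow> (('f, unit) trm set \<times> ('f, unit) trm set) set \<Rightarrow> bool" where
  "exact_cong ar Eqs \<theta> \<longleftrightarrow> exact ar Eqs (quot_alg (Fz ar Eqs) \<theta>)"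

definition projective_cong :: "('f \<Rightarrow> nat) \<Rightarrow> (('f, nat) trm \<times> ('f, nat) trm) set
    \<Rightarrow> (('f, unit) trm set \<times> ('f, unit) trm set) set \<Rightarrow> bool" where
  "projective_cong ar Eqs \<theta> \<longleftrightarrow> projective ar Eqs (quot_alg (Fz ar Eqs) \<theta>)"

definition egen_problem :: "('f \<Rightarrow> nat) \<Rightarrow> (('f, nat) trm \<times> ('f, nat) trm) set \<Rightarrow> nat
    \<Rightarrow> (nat \<Rightarrow> ('f, 'e) alg) \<Rightarrow> (('f, unit) trm set \<Rightarrow> nat \<Rightarrow> 'e) \<Rightarrow> bool" where
  "egen_problem ar Eqs m E h \<longleftrightarrow>
     (\<forall>k<m. one_gen ar (E k) \<and> exact ar Eqs (E k)) \<and>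
     hom ar (Fz ar Eqs) (prod_alg m E) h \<and>
     (\<forall>k<m. (\<lambda>x. h x k) ` carrier (Fz ar Eqs) = carrier (E k))"

text \<open>Solutions: the projective algebra P is taken (up to isomorphism) with carrier in the
  type of elements of free algebras over countably many variables.\<close>
definition solution :: "('f \<Rightarrow> nat) \<Rightarrow> (('f, nat) trm \<times> ('f, nat) trm) set \<Rightarrow> nat
    \<Rightarrow> (nat \<Rightarrow> ('f, 'e) alg) \<Rightarrow> (('f, unit) trm set \<Rightarrow> nat \<Rightarrow> 'e)
    \<Rightarrow> (('f, unit) trm set \<Rightarrow> ('f, nat) trm set) \<Rightarrow> ('f, ('f, nat) trm set) alg \<Rightarrow> bool" where
  "solution ar Eqs m E h g P \<longleftrightarrow>
     fin_gen ar P \<and> projective ar Eqs P \<and> hom ar (Fz ar Eqs) P g \<and>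
     (\<exists>f. hom ar P (prod_alg m E) f \<and> (\<forall>x\<in>carrier (Fz ar Eqs). f (g x) = h x))"

definition G_congs :: "('f \<Rightarrow> nat) \<Rightarrow> (('f, nat) trm \<times> ('f, nat) trm) set \<Rightarrow> nat
    \<Rightarrow> (nat \<Rightarrow> ('f, 'e) alg) \<Rightarrow> (('f, unit) trm set \<Rightarrow> nat \<Rightarrow> 'e)
    \<Rightarrow> (('f, unit) trm set \<times> ('f, unit) trm set) set set" where
  "G_congs ar Eqs m E h = {ker (Fz ar Eqs) g | g P. solution ar Eqs m E h g P}"

end

theory Submission
  imports Defs
begin

lemma subst_subst: "subst \<sigma> (subst \<tau> t) = subst (\<lambda>v. subst \<sigma> (\<tau> v)) t"
  by (induction t) auto

lemma subst_Var: "subst Var t = t"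
  by (induction t) (auto intro: map_idI)

lemma subst_cong: "(\<And>v. v \<in> vars t \<Longrightarrow> \<sigma> v = \<tau> v) \<Longrightarrow> subst \<sigma> t = subst \<tau> t"
  by (induction t) auto

lemma vars_subst: "vars (subst \<sigma> t) = (\<Union>v\<in>vars t. vars (\<sigma> v))"
  by (induction t) auto

lemma wf_subst: "wf_trm ar t \<Longrightarrow> (\<And>v. v \<in> vars t \<Longrightarrow> wf_trm ar (\<sigma> v)) \<Longrightarrow> wf_trm ar (subst \<sigma> t)"
  by (induction t) auto

lemma finite_vars: "finite (vars t)"
  by (induction t) auto

context
  fixes ar :: "'f \<Rightarrow> nat" and Eqs :: "(('f, nat) trm \<times> ('f, nat) trm) set"
  assumes var: "variety ar Eqs"
begin

lemma eqcons_wf: "eqcons ar Eqs s t \<Longrightarrow> wf_trm ar s \<and> wf_trm ar t"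
proof (induction rule: eqcons.induct)
  case (ax s t \<sigma>)
  then show ?case using var unfolding variety_def by (auto intro!: wf_subst)
next
  case (cong ss f ts)
  then show ?case by (auto simp: list_all2_conv_all_nth in_set_conv_nth)
qed auto

lemma eqcons_subst: "eqcons ar Eqs s t \<Longrightarrow> (\<And>v. wf_trm ar (\<sigma> v)) \<Longrightarrow> eqcons ar Eqs (subst \<sigma> s) (subst \<sigma> t)"
proof (induction rule: eqcons.induct)
  case (ax s t \<tau>)
  have "eqcons ar Eqs (subst (\<lambda>v. subst \<sigma> (\<tau> v)) s) (subst (\<lambda>v. subst \<sigma> (\<tau> v)) t)"
    using ax by (intro eqcons.ax) (auto intro!: wf_subst)
  then show ?case by (simp add: subst_subst)
next
  case (refl t)
  then show ?case by (auto intro!: eqcons.refl wf_subst)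
next
  case (sym s t)
  then show ?case by (auto intro: eqcons.sym)
next
  case (trans s t u)
  then show ?case by (auto intro: eqcons.trans)
next
  case (cong ss f ts)
  show ?case
    using cong by (auto intro!: eqcons.cong simp: list_all2_map1 list_all2_map2 elim: list_all2_mono)
qed

end

abbreviation FT where "FT ar Y \<equiv> free_terms ar Y"

definition substH :: "('f \<Rightarrow> nat) \<Rightarrow> (('f, nat) trm \<times> ('f, nat) trm) set \<Rightarrow> 'w set \<Rightarrow> ('v \<Rightarrow> ('f, 'w) trm) \<Rightarrow> ('f, 'v) trm set \<Rightarrow> ('f, 'w) trm set" where
  "substH ar Eqs Y2 \<sigma> c = fclass ar Eqs Y2 (subst \<sigma> (SOME t. t \<in> c))"

lemma Fn_FT: "length us = ar f \<Longrightarrow> set us \<subseteq> FT ar Y \<Longrightarrow> Fn f us \<in> FT ar Y"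
  by (auto simp: free_terms_def)

lemma subst_FT: "u \<in> FT ar Y1 \<Longrightarrow> (\<And>y. y \<in> Y1 \<Longrightarrow> \<sigma> y \<in> FT ar Y2) \<Longrightarrow> subst \<sigma> u \<in> FT ar Y2"
  by (auto simp: free_terms_def vars_subst intro!: wf_subst)

context
  fixes ar :: "'f \<Rightarrow> nat" and Eqs :: "(('f, nat) trm \<times> ('f, nat) trm) set"
  assumes var: "variety ar Eqs"
begin

lemma fclass_mem: "u \<in> FT ar Y \<Longrightarrow> u \<in> fclass ar Eqs Y u"
  by (auto simp: fclass_def free_terms_def intro: eqcons.refl)

lemma fclass_eq_iff: "u \<in> FT ar Y \<Longrightarrow> u' \<in> FT ar Y \<Longrightarrow>
   fclass ar Eqs Y u = fclass ar Eqs Y u' \<longleftrightarrow> eqcons ar Eqs u u'"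
proof
  assume "u \<in> FT ar Y" "u' \<in> FT ar Y" "fclass ar Eqs Y u = fclass ar Eqs Y u'"
  then show "eqcons ar Eqs u u'" using fclass_mem[of u Y] by (auto simp: fclass_def)
next
  assume "eqcons ar Eqs u u'"
  then show "fclass ar Eqs Y u = fclass ar Eqs Y u'"
    unfolding fclass_def by (auto intro: eqcons.trans eqcons.sym)
qed

lemma carrier_free: "carrier (free_alg ar Eqs Y) = fclass ar Eqs Y ` FT ar Y"
  by (simp add: free_alg_def)

lemma some_in_class:
  assumes "c \<in> carrier (free_alg ar Eqs Y)"
  shows "(SOME t. t \<in> c) \<in> c" "(SOME t. t \<in> c) \<in> FT ar Y" "fclass ar Eqs Y (SOME t. t \<in> c) = c"
proof -
  obtain u where u: "u \<in> FT ar Y" "c = fclass ar Eqs Y u" using assms by (auto simp: carrier_free)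
  then have "u \<in> c" using fclass_mem by auto
  then show 1: "(SOME t. t \<in> c) \<in> c" by (rule someI)
  then show 2: "(SOME t. t \<in> c) \<in> FT ar Y" using u by (auto simp: fclass_def)
  show "fclass ar Eqs Y (SOME t. t \<in> c) = c"
    using 1 2 u by (simp add: fclass_eq_iff) (simp add: fclass_def)
qed

lemma free_ops:
  assumes "length us = ar f" "set us \<subseteq> FT ar Y"
  shows "ops (free_alg ar Eqs Y) f (map (fclass ar Eqs Y) us) = fclass ar Eqs Y (Fn f us)"
proof -
  let ?us' = "map (\<lambda>c. SOME t. t \<in> c) (map (fclass ar Eqs Y) us)"
  have mem: "\<And>u. u \<in> set us \<Longrightarrow> (SOME t. t \<in> fclass ar Eqs Y u) \<in> fclass ar Eqs Y u"
    using assms fclass_mem by (meson someI subsetD)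
  have "list_all2 (eqcons ar Eqs) ?us' us"
    using mem by (auto simp: list_all2_map1 list_all2_same fclass_def)
  then have "eqcons ar Eqs (Fn f ?us') (Fn f us)"
    using assms by (intro eqcons.cong) auto
  moreover have "Fn f ?us' \<in> FT ar Y" using assms mem by (intro Fn_FT) (auto simp: fclass_def)
  moreover have "Fn f us \<in> FT ar Y" using assms by (intro Fn_FT) auto
  ultimately show ?thesis by (simp add: free_alg_def fclass_eq_iff)
qed

lemma algebra_free: "algebra ar (free_alg ar Eqs Y)"
  unfolding algebra_def
proof (intro allI impI)
  fix f xs assume a: "length xs = ar f \<and> set xs \<subseteq> carrier (free_alg ar Eqs Y)"
  then have "Fn f (map (\<lambda>c. SOME t. t \<in> c) xs) \<in> FT ar Y"
    by (intro Fn_FT) (auto dest: some_in_class)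
  then show "ops (free_alg ar Eqs Y) f xs \<in> carrier (free_alg ar Eqs Y)"
    by (simp add: free_alg_def)
qed

lemma free_hom_unique:
  assumes h1: "hom ar (free_alg ar Eqs Y) B h1" and h2: "hom ar (free_alg ar Eqs Y) B h2"
    and gen: "\<And>y. y \<in> Y \<Longrightarrow> h1 (fclass ar Eqs Y (Var y)) = h2 (fclass ar Eqs Y (Var y))"
    and x: "x \<in> carrier (free_alg ar Eqs Y)"
  shows "h1 x = h2 x"
proof -
  have "u \<in> FT ar Y \<longrightarrow> h1 (fclass ar Eqs Y u) = h2 (fclass ar Eqs Y u)" for u
  proof (induction u)
    case (Var v)
    then show ?case using gen by (auto simp: free_terms_def)
  next
    case (Fn f us)
    show ?case
    proof
      assume u: "Fn f us \<in> FT ar Y"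
      then have l: "length us = ar f" and s: "set us \<subseteq> FT ar Y" by (auto simp: free_terms_def)
      have sc: "set (map (fclass ar Eqs Y) us) \<subseteq> carrier (free_alg ar Eqs Y)"
        using s by (auto simp: carrier_free)
      have "h1 (fclass ar Eqs Y (Fn f us)) = h1 (ops (free_alg ar Eqs Y) f (map (fclass ar Eqs Y) us))"
        using free_ops[OF l s] by simp
      also have "\<dots> = ops B f (map h1 (map (fclass ar Eqs Y) us))"
        using h1 l sc unfolding hom_def by auto
      also have "map h1 (map (fclass ar Eqs Y) us) = map h2 (map (fclass ar Eqs Y) us)"
        using Fn s by auto
      also have "ops B f \<dots> = h2 (ops (free_alg ar Eqs Y) f (map (fclass ar Eqs Y) us))"
        using h2 l sc unfolding hom_def by auto
      also have "\<dots> = h2 (fclass ar Eqs Y (Fn f us))"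
        using free_ops[OF l s] by simp
      finally show "h1 (fclass ar Eqs Y (Fn f us)) = h2 (fclass ar Eqs Y (Fn f us))" .
    qed
  qed
  then show ?thesis using x by (auto simp: carrier_free)
qed

lemma substH_fclass:
  assumes "\<And>y. y \<in> Y1 \<Longrightarrow> \<sigma> y \<in> FT ar Y2" "\<And>y. wf_trm ar (\<sigma> y)" "u \<in> FT ar Y1"
  shows "substH ar Eqs Y2 \<sigma> (fclass ar Eqs Y1 u) = fclass ar Eqs Y2 (subst \<sigma> u)"
proof -
  let ?t = "SOME t. t \<in> fclass ar Eqs Y1 u"
  have c: "fclass ar Eqs Y1 u \<in> carrier (free_alg ar Eqs Y1)" using assms by (simp add: carrier_free)
  have "?t \<in> FT ar Y1" "eqcons ar Eqs ?t u" using some_in_class[OF c] by (auto simp: fclass_def)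
  then have "eqcons ar Eqs (subst \<sigma> ?t) (subst \<sigma> u)" "subst \<sigma> ?t \<in> FT ar Y2" "subst \<sigma> u \<in> FT ar Y2"
    using assms eqcons_subst[OF var, of ?t u \<sigma>] by (auto intro: subst_FT)
  then show ?thesis by (simp add: substH_def fclass_eq_iff)
qed

lemma substH_hom:
  assumes "\<And>y. y \<in> Y1 \<Longrightarrow> \<sigma> y \<in> FT ar Y2" "\<And>y. wf_trm ar (\<sigma> y)"
  shows "hom ar (free_alg ar Eqs Y1) (free_alg ar Eqs Y2) (substH ar Eqs Y2 \<sigma>)"
  unfolding hom_def
proof (intro conjI ballI allI impI)
  fix x assume "x \<in> carrier (free_alg ar Eqs Y1)"
  then obtain u where "u \<in> FT ar Y1" "x = fclass ar Eqs Y1 u" by (auto simp: carrier_free)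
  then show "substH ar Eqs Y2 \<sigma> x \<in> carrier (free_alg ar Eqs Y2)"
    using assms by (simp add: substH_fclass carrier_free subst_FT)
next
  fix f xs assume a: "length xs = ar f \<and> set xs \<subseteq> carrier (free_alg ar Eqs Y1)"
  let ?us = "map (\<lambda>c. SOME t. t \<in> c) xs"
  have "\<forall>x\<in>set xs. fclass ar Eqs Y1 (SOME t. t \<in> x) = x" using a some_in_class(3) by blast
  then have xs: "xs = map (fclass ar Eqs Y1) ?us" by (simp add: map_idI)
  have us: "set ?us \<subseteq> FT ar Y1" "length ?us = ar f" using a by (auto dest: some_in_class)
  have us2: "set (map (subst \<sigma>) ?us) \<subseteq> FT ar Y2" using us assms by (auto intro: subst_FT)
  have "substH ar Eqs Y2 \<sigma> (ops (free_alg ar Eqs Y1) f xs)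
      = substH ar Eqs Y2 \<sigma> (fclass ar Eqs Y1 (Fn f ?us))"
    using free_ops[OF us(2,1)] xs by metis
  also have "\<dots> = fclass ar Eqs Y2 (Fn f (map (subst \<sigma>) ?us))"
    using us assms Fn_FT[where us="?us" and ar=ar and f=f and Y=Y1] by (subst substH_fclass) auto
  also have "\<dots> = ops (free_alg ar Eqs Y2) f (map (fclass ar Eqs Y2) (map (subst \<sigma>) ?us))"
    using free_ops[of "map (subst \<sigma>) ?us" f Y2] us us2 by simp
  also have "map (fclass ar Eqs Y2) (map (subst \<sigma>) ?us) = map (substH ar Eqs Y2 \<sigma>) xs"
    using us assms by (subst (2) xs) (auto simp: substH_fclass)
  finally show "substH ar Eqs Y2 \<sigma> (ops (free_alg ar Eqs Y1) f xs) =
         ops (free_alg ar Eqs Y2) f (map (substH ar Eqs Y2 \<sigma>) xs)" .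
qed

end

lemma hom_comp: "hom ar A B f \<Longrightarrow> hom ar B C g \<Longrightarrow> hom ar A C (\<lambda>x. g (f x))"
  unfolding hom_def
proof (intro conjI ballI allI impI; elim conjE)
  fix fa xs
  assume h: "\<forall>x\<in>carrier A. f x \<in> carrier B"
    "\<forall>fa xs. length xs = ar fa \<and> set xs \<subseteq> carrier A \<longrightarrow> f (ops A fa xs) = ops B fa (map f xs)"
    "\<forall>f xs. length xs = ar f \<and> set xs \<subseteq> carrier B \<longrightarrow> g (ops B f xs) = ops C f (map g xs)"
    "length xs = ar fa" "set xs \<subseteq> carrier A"
  then have "set (map f xs) \<subseteq> carrier B" "length (map f xs) = ar fa" by auto
  then have "g (f (ops A fa xs)) = ops C fa (map g (map f xs))"
    using h by simp
  then show "g (f (ops A fa xs)) = ops C fa (map (\<lambda>x. g (f x)) xs)"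
    by (simp add: comp_def)
qed auto

lemma pre_map:
  assumes "set bs \<subseteq> \<psi> ` A"
  shows "map \<psi> (map (inv_into A \<psi>) bs) = bs" "set (map (inv_into A \<psi>) bs) \<subseteq> A"
proof -
  show "map \<psi> (map (inv_into A \<psi>) bs) = bs"
    using assms by (simp, intro map_idI) (auto intro: f_inv_into_f)
  show "set (map (inv_into A \<psi>) bs) \<subseteq> A"
    using assms by (auto intro: inv_into_into)
qed

lemma img_closed:
  assumes "hom ar A B \<psi>" "algebra ar A"
  shows "closed ar B (\<psi> ` carrier A)"
  unfolding closed_def
proof (intro allI impI)
  fix f bs assume a: "length bs = ar f \<and> set bs \<subseteq> \<psi> ` carrier A"
  let ?xs = "map (inv_into (carrier A) \<psi>) bs"
  have "ops B f bs = ops B f (map \<psi> ?xs)" using pre_map a by metis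
  also have "\<dots> = \<psi> (ops A f ?xs)" using assms a pre_map(2)[of bs \<psi>] unfolding hom_def by auto
  finally show "ops B f bs \<in> \<psi> ` carrier A"
    using assms a pre_map(2)[of bs \<psi>] unfolding algebra_def by auto
qed

lemma hom_img: "hom ar A B \<psi> \<Longrightarrow> hom ar A (subalg B (\<psi> ` carrier A)) \<psi>"
  by (auto simp: hom_def subalg_def)

lemma algebra_subalg: "closed ar B S \<Longrightarrow> algebra ar (subalg B S)"
  by (auto simp: algebra_def closed_def subalg_def)

lemma factor:
  assumes hp: "hom ar A B \<psi>" and hq: "hom ar A C q" and alg: "algebra ar A"
    and k: "\<And>x y. x \<in> carrier A \<Longrightarrow> y \<in> carrier A \<Longrightarrow> \<psi> x = \<psi> y \<Longrightarrow> q x = q y"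
  shows "hom ar (subalg B (\<psi> ` carrier A)) C (\<lambda>p. q (SOME x. x \<in> carrier A \<and> \<psi> x = p))"
    and "\<And>x. x \<in> carrier A \<Longrightarrow> q (SOME x'. x' \<in> carrier A \<and> \<psi> x' = \<psi> x) = q x"
proof -
  let ?F = "\<lambda>p. q (SOME x. x \<in> carrier A \<and> \<psi> x = p)"
  show F: "\<And>x. x \<in> carrier A \<Longrightarrow> ?F (\<psi> x) = q x"
  proof -
    fix x assume x: "x \<in> carrier A"
    have "(SOME x'. x' \<in> carrier A \<and> \<psi> x' = \<psi> x) \<in> carrier A \<and> \<psi> (SOME x'. x' \<in> carrier A \<and> \<psi> x' = \<psi> x) = \<psi> x"
    proof (rule someI_ex[where P = "\<lambda>x'. x' \<in> carrier A \<and> \<psi> x' = \<psi> x"])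
      show "\<exists>x'. x' \<in> carrier A \<and> \<psi> x' = \<psi> x" using x by blast
    qed
    then show "?F (\<psi> x) = q x" using k[of "SOME x'. x' \<in> carrier A \<and> \<psi> x' = \<psi> x" x] x by simp
  qed
  show "hom ar (subalg B (\<psi> ` carrier A)) C ?F"
    unfolding hom_def
  proof (intro conjI ballI allI impI)
    fix p assume "p \<in> carrier (subalg B (\<psi> ` carrier A))"
    then obtain x where "x \<in> carrier A" "p = \<psi> x" by (auto simp: subalg_def)
    then show "?F p \<in> carrier C" using F hq unfolding hom_def by auto
  next
    fix f ps assume a: "length ps = ar f \<and> set ps \<subseteq> carrier (subalg B (\<psi> ` carrier A))"
    let ?xs = "map (inv_into (carrier A) \<psi>) ps"
    have ps: "set ps \<subseteq> \<psi> ` carrier A" using a by (simp add: subalg_def)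
    have e: "map \<psi> ?xs = ps" and xs: "set ?xs \<subseteq> carrier A" using pre_map[OF ps] by auto
    have "ops (subalg B (\<psi> ` carrier A)) f ps = ops B f (map \<psi> ?xs)"
      using e by (simp add: subalg_def)
    also have "\<dots> = \<psi> (ops A f ?xs)"
      using hp a xs unfolding hom_def by simp
    finally have "ops (subalg B (\<psi> ` carrier A)) f ps = \<psi> (ops A f ?xs)" .
    have o: "ops A f ?xs \<in> carrier A" using alg xs a unfolding algebra_def by auto
    from \<open>ops (subalg B (\<psi> ` carrier A)) f ps = \<psi> (ops A f ?xs)\<close>
    have "?F (ops (subalg B (\<psi> ` carrier A)) f ps) = ?F (\<psi> (ops A f ?xs))" by (rule arg_cong)
    also have "\<dots> = q (ops A f ?xs)" by (rule F[OF o])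
    also have "\<dots> = ops C f (map q ?xs)" using hq xs a unfolding hom_def by simp
    also have "map q ?xs = map ?F (map \<psi> ?xs)"
      unfolding map_map comp_def using F xs by (intro map_cong) auto
    also have "map \<psi> ?xs = ps" by (rule e)
    finally show "?F (ops (subalg B (\<psi> ` carrier A)) f ps) = ops C f (map ?F ps)" .
  qed
qed

lemma quot_some:
  assumes eq: "equiv A r" and C: "C \<in> A // r"
  shows "(SOME x. x \<in> C) \<in> C" "(SOME x. x \<in> C) \<in> A" "C = r `` {SOME x. x \<in> C}"
proof -
  obtain x where x: "x \<in> A" "C = r `` {x}" using C by (rule quotientE)
  have "x \<in> C" using x equiv_class_self[OF eq x(1)] by simp
  then show s: "(SOME x. x \<in> C) \<in> C" by (rule someI)
  have "r \<subseteq> A \<times> A" using eq by (simp add: equiv_type)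
  then show "(SOME x. x \<in> C) \<in> A" using s x by blast
  have "(x, SOME x. x \<in> C) \<in> r" using s x by simp
  then have e: "r `` {x} = r `` {SOME x. x \<in> C}" by (rule equiv_class_eq[OF eq])
  show "C = r `` {SOME x. x \<in> C}" by (subst (1) x(2)) (rule e)
qed

lemma equiv_ker: "equiv (carrier A) (ker A \<psi>)"
  unfolding equiv_def refl_on_def sym_def trans_def ker_def by auto

lemma quot_facts:
  assumes cg: "congruence ar A \<theta>" and alg: "algebra ar A"
  shows "algebra ar (quot_alg A \<theta>)" "hom ar A (quot_alg A \<theta>) (\<lambda>x. \<theta> `` {x})"
    "ker A (\<lambda>x. \<theta> `` {x}) = \<theta>"
proof -
  have eq: "equiv (carrier A) \<theta>" using cg by (simp add: congruence_def)
  have some: "(SOME x. x \<in> C) \<in> C" "(SOME x. x \<in> C) \<in> carrier A" if "C \<in> carrier A // \<theta>" for C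
    using quot_some[OF eq that] by auto
  show "algebra ar (quot_alg A \<theta>)"
    unfolding algebra_def
  proof (intro allI impI)
    fix f Cs assume a: "length Cs = ar f \<and> set Cs \<subseteq> carrier (quot_alg A \<theta>)"
    then have "set (map (\<lambda>X. SOME x. x \<in> X) Cs) \<subseteq> carrier A"
      using some by (auto simp: quot_alg_def)
    then have "ops A f (map (\<lambda>X. SOME x. x \<in> X) Cs) \<in> carrier A"
      using alg a unfolding algebra_def by simp
    then show "ops (quot_alg A \<theta>) f Cs \<in> carrier (quot_alg A \<theta>)"
      by (simp add: quot_alg_def quotientI)
  qed
  show "hom ar A (quot_alg A \<theta>) (\<lambda>x. \<theta> `` {x})"
    unfolding hom_def
  proof (intro conjI ballI allI impI)
    fix x assume "x \<in> carrier A"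
    then show "\<theta> `` {x} \<in> carrier (quot_alg A \<theta>)" by (simp add: quot_alg_def quotientI)
  next
    fix f xs assume a: "length xs = ar f \<and> set xs \<subseteq> carrier A"
    let ?ys = "map (\<lambda>X. SOME x. x \<in> X) (map (\<lambda>x. \<theta> `` {x}) xs)"
    have "(x, SOME y. y \<in> \<theta> `` {x}) \<in> \<theta>" if "x \<in> carrier A" for x
      using that eq some[of "\<theta> `` {x}"] by (auto simp: quotientI)
    then have "list_all2 (\<lambda>x y. (x, y) \<in> \<theta>) xs ?ys"
      using a by (auto simp: list_all2_map2 list_all2_same)
    then have "(ops A f xs, ops A f ?ys) \<in> \<theta>" using cg a by (simp add: congruence_def)
    then have "\<theta> `` {ops A f xs} = \<theta> `` {ops A f ?ys}" using eq by (simp add: equiv_class_eq)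
    then show "\<theta> `` {ops A f xs} = ops (quot_alg A \<theta>) f (map (\<lambda>x. \<theta> `` {x}) xs)"
      by (simp add: quot_alg_def)
  qed
  show "ker A (\<lambda>x. \<theta> `` {x}) = \<theta>"
  proof
    show "ker A (\<lambda>x. \<theta> `` {x}) \<subseteq> \<theta>"
      using eq unfolding ker_def by (auto simp: equiv_class_eq_iff)
    have "\<theta> \<subseteq> carrier A \<times> carrier A" using eq by (simp add: equiv_type)
    show "\<theta> \<subseteq> ker A (\<lambda>x. \<theta> `` {x})"
    proof
      fix p assume p: "p \<in> \<theta>"
      obtain a b where ab: "p = (a, b)" by (cases p)
      have "\<theta> `` {a} = \<theta> `` {b}" using p ab by (intro equiv_class_eq[OF eq]) simp
      then show "p \<in> ker A (\<lambda>x. \<theta> `` {x})"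
        using p ab \<open>\<theta> \<subseteq> carrier A \<times> carrier A\<close> unfolding ker_def by auto
    qed
  qed
qed

lemma iso_quot:
  assumes hp: "hom ar A B \<psi>" and alg: "algebra ar A"
  shows "iso ar (quot_alg A (ker A \<psi>)) (subalg B (\<psi> ` carrier A))"
proof -
  let ?\<theta> = "ker A \<psi>"
  have eq: "equiv (carrier A) ?\<theta>" by (rule equiv_ker)
  have some: "(SOME x. x \<in> C) \<in> C" "(SOME x. x \<in> C) \<in> carrier A" if "C \<in> carrier A // ?\<theta>" for C
    using quot_some[OF eq that] by auto
  have cls: "C = ?\<theta> `` {SOME x. x \<in> C}" if "C \<in> carrier A // ?\<theta>" for C
    using quot_some[OF eq that] by auto
  let ?\<Phi> = "\<lambda>C. \<psi> (SOME x. x \<in> C)"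
  have val: "?\<Phi> (?\<theta> `` {x}) = \<psi> x" if "x \<in> carrier A" for x
  proof -
    have "?\<theta> `` {x} \<in> carrier A // ?\<theta>" using that by (rule quotientI)
    then have "(SOME y. y \<in> ?\<theta> `` {x}) \<in> ?\<theta> `` {x}" by (rule some)
    then show ?thesis by (auto simp: ker_def)
  qed
  have "hom ar (quot_alg A ?\<theta>) (subalg B (\<psi> ` carrier A)) ?\<Phi>"
    unfolding hom_def
  proof (intro conjI ballI allI impI)
    fix C assume "C \<in> carrier (quot_alg A ?\<theta>)"
    then show "?\<Phi> C \<in> carrier (subalg B (\<psi> ` carrier A))"
      using some by (auto simp: quot_alg_def subalg_def)
  next
    fix f Cs assume a: "length Cs = ar f \<and> set Cs \<subseteq> carrier (quot_alg A ?\<theta>)"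
    let ?xs = "map (\<lambda>X. SOME x. x \<in> X) Cs"
    have xs: "set ?xs \<subseteq> carrier A" using a some by (auto simp: quot_alg_def)
    have o: "ops A f ?xs \<in> carrier A" using alg xs a unfolding algebra_def by simp
    have "?\<Phi> (ops (quot_alg A ?\<theta>) f Cs) = ?\<Phi> (?\<theta> `` {ops A f ?xs})" by (simp add: quot_alg_def)
    also have "\<dots> = \<psi> (ops A f ?xs)" using val o by blast
    also have "\<dots> = ops B f (map \<psi> ?xs)" using hp xs a unfolding hom_def by simp
    finally show "?\<Phi> (ops (quot_alg A ?\<theta>) f Cs) = ops (subalg B (\<psi> ` carrier A)) f (map ?\<Phi> Cs)"
      by (simp add: subalg_def comp_def)
  qed
  moreover have "bij_betw ?\<Phi> (carrier (quot_alg A ?\<theta>)) (carrier (subalg B (\<psi> ` carrier A)))"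
    unfolding bij_betw_def
  proof
    show "inj_on ?\<Phi> (carrier (quot_alg A ?\<theta>))"
    proof (rule inj_onI)
      fix C D assume C: "C \<in> carrier (quot_alg A ?\<theta>)" and D: "D \<in> carrier (quot_alg A ?\<theta>)"
        and e: "?\<Phi> C = ?\<Phi> D"
      have C': "C \<in> carrier A // ?\<theta>" and D': "D \<in> carrier A // ?\<theta>" using C D by (auto simp: quot_alg_def)
      have "((SOME x. x \<in> C), (SOME x. x \<in> D)) \<in> ?\<theta>" using e some[OF C'] some[OF D'] by (auto simp: ker_def)
      then show "C = D" using cls[OF C'] cls[OF D'] eq by (metis equiv_class_eq)
    qed
    show "?\<Phi> ` carrier (quot_alg A ?\<theta>) = carrier (subalg B (\<psi> ` carrier A))"
    proof
      show "?\<Phi> ` carrier (quot_alg A ?\<theta>) \<subseteq> carrier (subalg B (\<psi> ` carrier A))"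
        using some by (auto simp: quot_alg_def subalg_def)
      show "carrier (subalg B (\<psi> ` carrier A)) \<subseteq> ?\<Phi> ` carrier (quot_alg A ?\<theta>)"
      proof
        fix p assume "p \<in> carrier (subalg B (\<psi> ` carrier A))"
        then obtain x where x: "x \<in> carrier A" "p = \<psi> x" by (auto simp: subalg_def)
        then have "p = ?\<Phi> (?\<theta> `` {x})" using val by simp
        moreover have "?\<theta> `` {x} \<in> carrier (quot_alg A ?\<theta>)" using x by (simp add: quot_alg_def quotientI)
        ultimately show "p \<in> ?\<Phi> ` carrier (quot_alg A ?\<theta>)" by blast
      qed
    qed
  qed
  ultimately show ?thesis unfolding iso_def by blast
qed

context
  fixes ar :: "'f \<Rightarrow> nat" and Eqs :: "(('f, nat) trm \<times> ('f, nat) trm) set"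
  assumes var: "variety ar Eqs"
begin

abbreviation zb where "zb \<equiv> fclass ar Eqs (UNIV :: unit set) (Var ())"

lemma Var_FT: "y \<in> Y \<Longrightarrow> Var y \<in> FT ar Y"
  by (simp add: free_terms_def)

lemma zb_carrier: "zb \<in> carrier (Fz ar Eqs)"
  by (simp add: Fz_def carrier_free[OF var] Var_FT)

lemma algebra_Fz: "algebra ar (Fz ar Eqs)"
  unfolding Fz_def by (rule algebra_free[OF var])

lemma Fz_img_sub:
  assumes hp: "hom ar (Fz ar Eqs) B \<psi>" and cl: "closed ar B S" and z: "\<psi> zb \<in> S"
    and x: "x \<in> carrier (Fz ar Eqs)"
  shows "\<psi> x \<in> S"
proof -
  have "u \<in> FT ar (UNIV :: unit set) \<longrightarrow> \<psi> (fclass ar Eqs UNIV u) \<in> S" for u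
  proof (induction u)
    case (Var v)
    then show ?case using z by simp
  next
    case (Fn f us)
    show ?case
    proof
      assume u: "Fn f us \<in> FT ar (UNIV :: unit set)"
      then have l: "length us = ar f" and s: "set us \<subseteq> FT ar (UNIV :: unit set)" by (auto simp: free_terms_def)
      have sc: "set (map (fclass ar Eqs UNIV) us) \<subseteq> carrier (Fz ar Eqs)"
        using s by (auto simp: carrier_free[OF var] Fz_def)
      have "\<psi> (fclass ar Eqs UNIV (Fn f us)) = \<psi> (ops (Fz ar Eqs) f (map (fclass ar Eqs UNIV) us))"
        using free_ops[OF var l s] by (simp add: Fz_def)
      also have "\<dots> = ops B f (map \<psi> (map (fclass ar Eqs UNIV) us))"
        using hp l sc unfolding hom_def by auto
      also have "\<dots> \<in> S"
      proof -
        have "set (map \<psi> (map (fclass ar Eqs UNIV) us)) \<subseteq> S" using Fn s by auto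
        moreover have "length (map \<psi> (map (fclass ar Eqs UNIV) us)) = ar f" using l by simp
        ultimately show ?thesis using cl unfolding closed_def by blast
      qed
      finally show "\<psi> (fclass ar Eqs UNIV (Fn f us)) \<in> S" .
    qed
  qed
  then show ?thesis using x by (auto simp: carrier_free[OF var] Fz_def)
qed

lemma Sg_img:
  assumes hp: "hom ar (Fz ar Eqs) B \<psi>"
  shows "Sg ar B {\<psi> zb} = \<psi> ` carrier (Fz ar Eqs)"
    "Sg ar (subalg B (\<psi> ` carrier (Fz ar Eqs))) {\<psi> zb} = \<psi> ` carrier (Fz ar Eqs)"
proof -
  let ?I = "\<psi> ` carrier (Fz ar Eqs)"
  have cl: "closed ar B ?I" by (rule img_closed[OF hp algebra_Fz])
  have zI: "\<psi> zb \<in> ?I" using zb_carrier by blast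
  have IB: "?I \<subseteq> carrier B" using hp unfolding hom_def by auto
  show "Sg ar B {\<psi> zb} = ?I"
    unfolding Sg_def
  proof (rule antisym)
    show "\<Inter>{S. {\<psi> zb} \<subseteq> S \<and> S \<subseteq> carrier B \<and> closed ar B S} \<subseteq> ?I"
      using cl zI IB by (intro Inter_lower) auto
    show "?I \<subseteq> \<Inter>{S. {\<psi> zb} \<subseteq> S \<and> S \<subseteq> carrier B \<and> closed ar B S}"
      using Fz_img_sub[OF hp] by (intro Inter_greatest) blast
  qed
  have clP: "closed ar (subalg B ?I) S \<longleftrightarrow> closed ar B S" for S
    by (simp add: closed_def subalg_def)
  show "Sg ar (subalg B ?I) {\<psi> zb} = ?I"
    unfolding Sg_def
  proof (rule antisym)
    show "\<Inter>{S. {\<psi> zb} \<subseteq> S \<and> S \<subseteq> carrier (subalg B ?I) \<and> closed ar (subalg B ?I) S} \<subseteq> ?I"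
      using cl zI clP by (intro Inter_lower) (auto simp: subalg_def)
    show "?I \<subseteq> \<Inter>{S. {\<psi> zb} \<subseteq> S \<and> S \<subseteq> carrier (subalg B ?I) \<and> closed ar (subalg B ?I) S}"
      using Fz_img_sub[OF hp] clP by (intro Inter_greatest) blast
  qed
qed

lemma Fz_hom_eval:
  assumes hp: "hom ar (Fz ar Eqs) (free_alg ar Eqs Y) \<phi>" and t: "\<phi> zb = fclass ar Eqs Y t" "t \<in> FT ar Y"
    and s: "s \<in> FT ar (UNIV :: unit set)"
  shows "\<phi> (fclass ar Eqs UNIV s) = fclass ar Eqs Y (subst (\<lambda>_. t) s)"
proof -
  have wt: "wf_trm ar t" using t by (simp add: free_terms_def)
  have h2: "hom ar (free_alg ar Eqs UNIV) (free_alg ar Eqs Y) (substH ar Eqs Y (\<lambda>_::unit. t))"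
    using t wt by (intro substH_hom[OF var]) auto
  have h1: "hom ar (free_alg ar Eqs UNIV) (free_alg ar Eqs Y) \<phi>" using hp by (simp add: Fz_def)
  have gen: "\<phi> (fclass ar Eqs UNIV (Var y)) = substH ar Eqs Y (\<lambda>_. t) (fclass ar Eqs UNIV (Var y))"
    if "y \<in> UNIV" for y :: unit
    using t wt by (simp add: substH_fclass[OF var] Var_FT)
  have sc: "fclass ar Eqs UNIV s \<in> carrier (free_alg ar Eqs UNIV)" using s by (simp add: carrier_free[OF var])
  have "\<phi> (fclass ar Eqs UNIV s) = substH ar Eqs Y (\<lambda>_. t) (fclass ar Eqs UNIV s)"
    by (rule free_hom_unique[OF var h1 h2 gen sc])
  also have "\<dots> = fclass ar Eqs Y (subst (\<lambda>_. t) s)"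
    using t wt s by (simp add: substH_fclass[OF var])
  finally show ?thesis .
qed

lemma key:
  assumes hp: "hom ar (Fz ar Eqs) (free_alg ar Eqs Y) \<phi>"
  obtains Y0 :: "nat set" and \<psi> where "finite Y0" "hom ar (Fz ar Eqs) (free_alg ar Eqs Y0) \<psi>"
    "ker (Fz ar Eqs) \<psi> = ker (Fz ar Eqs) \<phi>"
proof -
  have "\<phi> zb \<in> carrier (free_alg ar Eqs Y)" using hp zb_carrier unfolding hom_def by auto
  then obtain t where t: "t \<in> FT ar Y" "\<phi> zb = fclass ar Eqs Y t" by (auto simp: carrier_free[OF var])
  define V where "V = vars t"
  have fV: "finite V" unfolding V_def by (rule finite_vars)
  obtain \<beta> :: "_ \<Rightarrow> nat" and n where \<beta>: "\<beta> ` V = {i. i < n}" "inj_on \<beta> V"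
    using finite_imp_inj_to_nat_seg[OF fV] by (elim exE conjE)
  define Y0 where "Y0 = \<beta> ` V"
  define t' where "t' = subst (\<lambda>v. Var (\<beta> v)) t"
  have wt: "wf_trm ar t" using t by (simp add: free_terms_def)
  have t'FT: "t' \<in> FT ar Y0"
    unfolding t'_def Y0_def free_terms_def using wt by (auto simp: vars_subst V_def intro!: wf_subst)
  then have wt': "wf_trm ar t'" by (simp add: free_terms_def)
  define \<psi> where "\<psi> = substH ar Eqs Y0 (\<lambda>_::unit. t')"
  have hpsi: "hom ar (Fz ar Eqs) (free_alg ar Eqs Y0) \<psi>"
    unfolding \<psi>_def Fz_def using t'FT wt' by (intro substH_hom[OF var]) auto
  define \<gamma> where "\<gamma> = inv_into V \<beta>"
  have bk: "subst (\<lambda>v. Var (\<gamma> v)) (subst (\<lambda>v. Var (\<beta> v)) u) = u" if "vars u \<subseteq> V" for u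
  proof -
    have "subst (\<lambda>v. Var (\<gamma> v)) (subst (\<lambda>v. Var (\<beta> v)) u) = subst (\<lambda>v. Var (\<gamma> (\<beta> v))) u"
      by (simp add: subst_subst)
    also have "\<dots> = subst Var u"
      using that \<beta>(2) by (intro subst_cong) (auto simp: \<gamma>_def inv_into_f_f)
    finally show ?thesis by (simp add: subst_Var)
  qed
  have iff: "\<psi> x = \<psi> x' \<longleftrightarrow> \<phi> x = \<phi> x'" if x: "x \<in> carrier (Fz ar Eqs)" "x' \<in> carrier (Fz ar Eqs)" for x x'
  proof -
    obtain s s' where s: "s \<in> FT ar (UNIV :: unit set)" "x = fclass ar Eqs UNIV s"
      and s': "s' \<in> FT ar (UNIV :: unit set)" "x' = fclass ar Eqs UNIV s'"
      using x by (auto simp: Fz_def carrier_free[OF var])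
    have a: "subst (\<lambda>_. t) r \<in> FT ar Y" "vars (subst (\<lambda>_. t) r) \<subseteq> V"
      "subst (\<lambda>_. t') r = subst (\<lambda>v. Var (\<beta> v)) (subst (\<lambda>_. t) r)"
      "subst (\<lambda>v. Var (\<beta> v)) (subst (\<lambda>_. t) r) \<in> FT ar Y0"
      if "r \<in> FT ar (UNIV :: unit set)" for r
    proof -
      show 1: "subst (\<lambda>_. t) r \<in> FT ar Y" using that t by (intro subst_FT) auto
      show 2: "vars (subst (\<lambda>_. t) r) \<subseteq> V" by (auto simp: vars_subst V_def)
      show "subst (\<lambda>_. t') r = subst (\<lambda>v. Var (\<beta> v)) (subst (\<lambda>_. t) r)"
        by (simp add: subst_subst t'_def)
      show "subst (\<lambda>v. Var (\<beta> v)) (subst (\<lambda>_. t) r) \<in> FT ar Y0"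
        using 1 2 unfolding free_terms_def Y0_def by (auto simp: vars_subst V_def intro!: wf_subst)
    qed
    have ps: "\<psi> (fclass ar Eqs UNIV r) = fclass ar Eqs Y0 (subst (\<lambda>_. t') r)" if "r \<in> FT ar (UNIV :: unit set)" for r
      unfolding \<psi>_def using that t'FT wt' by (simp add: substH_fclass[OF var])
    have ph: "\<phi> (fclass ar Eqs UNIV r) = fclass ar Eqs Y (subst (\<lambda>_. t) r)" if "r \<in> FT ar (UNIV :: unit set)" for r
      using Fz_hom_eval[OF hp t(2) t(1) that] .
    let ?a = "subst (\<lambda>_. t) s" and ?a' = "subst (\<lambda>_. t) s'"
    have "\<psi> x = \<psi> x' \<longleftrightarrow> eqcons ar Eqs (subst (\<lambda>v. Var (\<beta> v)) ?a) (subst (\<lambda>v. Var (\<beta> v)) ?a')"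
      using s s' ps a by (simp add: fclass_eq_iff[OF var])
    also have "\<dots> \<longleftrightarrow> eqcons ar Eqs ?a ?a'"
    proof
      assume "eqcons ar Eqs (subst (\<lambda>v. Var (\<beta> v)) ?a) (subst (\<lambda>v. Var (\<beta> v)) ?a')"
      then have "eqcons ar Eqs (subst (\<lambda>v. Var (\<gamma> v)) (subst (\<lambda>v. Var (\<beta> v)) ?a))
          (subst (\<lambda>v. Var (\<gamma> v)) (subst (\<lambda>v. Var (\<beta> v)) ?a'))"
        by (rule eqcons_subst[OF var]) simp
      then show "eqcons ar Eqs ?a ?a'" using bk[OF a(2)[OF s(1)]] bk[OF a(2)[OF s'(1)]] by simp
    next
      assume "eqcons ar Eqs ?a ?a'"
      then show "eqcons ar Eqs (subst (\<lambda>v. Var (\<beta> v)) ?a) (subst (\<lambda>v. Var (\<beta> v)) ?a')"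
        by (rule eqcons_subst[OF var]) simp
    qed
    also have "\<dots> \<longleftrightarrow> \<phi> x = \<phi> x'"
      using s s' ph a by (simp add: fclass_eq_iff[OF var])
    finally show ?thesis .
  qed
  have "ker (Fz ar Eqs) \<psi> = ker (Fz ar Eqs) \<phi>"
    unfolding ker_def using iff by auto
  moreover have "finite Y0" unfolding Y0_def using fV by simp
  ultimately show ?thesis using that hpsi by blast
qed

end

theorem theorem4p6:
  fixes ar :: "'f \<Rightarrow> nat"
    and Eqs :: "(('f, nat) trm \<times> ('f, nat) trm) set"
    and m :: nat
    and E :: "nat \<Rightarrow> ('f, 'e) alg"
    and h :: "('f, unit) trm set \<Rightarrow> nat \<Rightarrow> 'e"
    and \<theta> :: "(('f, unit) trm set \<times> ('f, unit) trm set) set"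
  assumes "variety ar Eqs"
    and "egen_problem ar Eqs m E h"
    and "congruence ar (Fz ar Eqs) \<theta>"
  shows "(\<theta> \<in> G_congs ar Eqs m E h \<longrightarrow>
            exact_cong ar Eqs \<theta> \<and> \<theta> \<subseteq> ker (Fz ar Eqs) h)
       \<and> (projective_cong ar Eqs \<theta> \<and> \<theta> \<subseteq> ker (Fz ar Eqs) h \<longrightarrow>
            \<theta> \<in> G_congs ar Eqs m E h)"
proof -
  note var = assms(1)
  note cg = assms(3)
  let ?F = "Fz ar Eqs"
  let ?z = "fclass ar Eqs (UNIV :: unit set) (Var ())"
  have algF: "algebra ar ?F" by (rule algebra_Fz[OF var])
  have zc: "?z \<in> carrier ?F" by (rule zb_carrier[OF var])
  have hh: "hom ar ?F (prod_alg m E) h" using assms(2) by (simp add: egen_problem_def)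
  have eqv: "equiv (carrier ?F) \<theta>" using cg by (simp add: congruence_def)
  have part1: "exact_cong ar Eqs \<theta> \<and> \<theta> \<subseteq> ker ?F h" if mem: "\<theta> \<in> G_congs ar Eqs m E h"
  proof -
    obtain g P where th: "\<theta> = ker ?F g" and sol: "solution ar Eqs m E h g P"
      using mem unfolding G_congs_def by blast
    from sol have hg: "hom ar ?F P g" and pr: "projective ar Eqs P"
      by (auto simp: solution_def)
    from sol obtain f where hf: "hom ar P (prod_alg m E) f" and fgh: "\<forall>x\<in>carrier ?F. f (g x) = h x"
      by (auto simp: solution_def)
    from pr obtain Y :: "('f, nat) trm set set" and i j where hi: "hom ar P (free_alg ar Eqs Y) i"
      and hj: "hom ar (free_alg ar Eqs Y) P j" and ji: "\<forall>x\<in>carrier P. j (i x) = x"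
      by (auto simp: projective_def)
    have hphi: "hom ar ?F (free_alg ar Eqs Y) (\<lambda>x. i (g x))" by (rule hom_comp[OF hg hi])
    have kphi: "ker ?F (\<lambda>x. i (g x)) = ker ?F g"
    proof -
      have "i (g x) = i (g x') \<longleftrightarrow> g x = g x'" if "x \<in> carrier ?F" "x' \<in> carrier ?F" for x x'
      proof -
        have "g x \<in> carrier P" "g x' \<in> carrier P" using hg that unfolding hom_def by auto
        then show ?thesis using ji by metis
      qed
      then show ?thesis unfolding ker_def by auto
    qed
    obtain Y0 :: "nat set" and \<psi> where fY0: "finite Y0" and hpsi: "hom ar ?F (free_alg ar Eqs Y0) \<psi>"
      and kpsi: "ker ?F \<psi> = ker ?F (\<lambda>x. i (g x))"
      using key[OF var hphi] by blast
    have kth: "ker ?F \<psi> = \<theta>" using kpsi kphi th by simp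
    have "exact ar Eqs (quot_alg ?F \<theta>)"
      unfolding exact_def
    proof (intro conjI exI)
      show "algebra ar (quot_alg ?F \<theta>)" by (rule quot_facts(1)[OF cg algF])
      show "finite Y0" by (rule fY0)
      show "finite {\<psi> ?z}" by simp
      show "{\<psi> ?z} \<subseteq> carrier (free_alg ar Eqs Y0)" using hpsi zc unfolding hom_def by auto
      show "iso ar (quot_alg ?F \<theta>) (subalg (free_alg ar Eqs Y0) (Sg ar (free_alg ar Eqs Y0) {\<psi> ?z}))"
        using iso_quot[OF hpsi algF] Sg_img(1)[OF var hpsi] kth by simp
    qed
    then have "exact_cong ar Eqs \<theta>" by (simp add: exact_cong_def)
    moreover have "\<theta> \<subseteq> ker ?F h"
    proof
      fix p assume "p \<in> \<theta>"
      then obtain a a' where p: "p = (a, a')" "a \<in> carrier ?F" "a' \<in> carrier ?F" "g a = g a'"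
        using th unfolding ker_def by auto
      then have "h a = h a'" using fgh by metis
      then show "p \<in> ker ?F h" using p unfolding ker_def by auto
    qed
    ultimately show ?thesis by blast
  qed
  have part2: "\<theta> \<in> G_congs ar Eqs m E h" if pc: "projective_cong ar Eqs \<theta>" and thk: "\<theta> \<subseteq> ker ?F h"
  proof -
    let ?A = "quot_alg ?F \<theta>"
    let ?q = "\<lambda>x. \<theta> `` {x}"
    have hq: "hom ar ?F ?A ?q" by (rule quot_facts(2)[OF cg algF])
    have kq: "ker ?F ?q = \<theta>" by (rule quot_facts(3)[OF cg algF])
    from pc obtain Y' :: "('f, unit) trm set set set" and i j where hi: "hom ar ?A (free_alg ar Eqs Y') i"
      and hj: "hom ar (free_alg ar Eqs Y') ?A j" and ji: "\<forall>x\<in>carrier ?A. j (i x) = x"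
      by (auto simp: projective_cong_def projective_def)
    have hphi: "hom ar ?F (free_alg ar Eqs Y') (\<lambda>x. i (?q x))" by (rule hom_comp[OF hq hi])
    have kphi: "ker ?F (\<lambda>x. i (?q x)) = \<theta>"
    proof -
      have "i (?q x) = i (?q x') \<longleftrightarrow> ?q x = ?q x'" if "x \<in> carrier ?F" "x' \<in> carrier ?F" for x x'
      proof -
        have "?q x \<in> carrier ?A" "?q x' \<in> carrier ?A" using hq that unfolding hom_def by auto
        then show ?thesis using ji by metis
      qed
      then have "ker ?F (\<lambda>x. i (?q x)) = ker ?F ?q" unfolding ker_def by auto
      then show ?thesis using kq by simp
    qed
    obtain Y0 :: "nat set" and \<psi> where fY0: "finite Y0" and hpsi: "hom ar ?F (free_alg ar Eqs Y0) \<psi>"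
      and kpsi: "ker ?F \<psi> = ker ?F (\<lambda>x. i (?q x))"
      using key[OF var hphi] by blast
    have kth: "ker ?F \<psi> = \<theta>" using kpsi kphi by simp
    have psi_q: "\<psi> x = \<psi> y \<longleftrightarrow> ?q x = ?q y" if "x \<in> carrier ?F" "y \<in> carrier ?F" for x y
    proof -
      have "\<psi> x = \<psi> y \<longleftrightarrow> (x, y) \<in> ker ?F \<psi>" using that unfolding ker_def by auto
      also have "\<dots> \<longleftrightarrow> (x, y) \<in> ker ?F ?q" using kth kq by simp
      also have "\<dots> \<longleftrightarrow> ?q x = ?q y" using that unfolding ker_def by auto
      finally show ?thesis .
    qed
    let ?I = "\<psi> ` carrier ?F"
    let ?P = "subalg (free_alg ar Eqs Y0) ?I"
    have hpP: "hom ar ?F ?P \<psi>" by (rule hom_img[OF hpsi])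
    have clI: "closed ar (free_alg ar Eqs Y0) ?I" by (rule img_closed[OF hpsi algF])
    have algP: "algebra ar ?P" by (rule algebra_subalg[OF clI])
    have hfac: "hom ar ?P (prod_alg m E) (\<lambda>p. h (SOME x. x \<in> carrier ?F \<and> \<psi> x = p))"
      and fac: "\<And>x. x \<in> carrier ?F \<Longrightarrow> h (SOME x'. x' \<in> carrier ?F \<and> \<psi> x' = \<psi> x) = h x"
    proof -
      have k: "h x = h y" if "x \<in> carrier ?F" "y \<in> carrier ?F" "\<psi> x = \<psi> y" for x y
      proof -
        have "(x, y) \<in> \<theta>" using that kth unfolding ker_def by auto
        then show ?thesis using thk unfolding ker_def by auto
      qed
      show "hom ar ?P (prod_alg m E) (\<lambda>p. h (SOME x. x \<in> carrier ?F \<and> \<psi> x = p))"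
        by (rule factor(1)[OF hpsi hh algF k])
      show "\<And>x. x \<in> carrier ?F \<Longrightarrow> h (SOME x'. x' \<in> carrier ?F \<and> \<psi> x' = \<psi> x) = h x"
        by (rule factor(2)[OF hpsi hh algF k])
    qed
    define Fm where "Fm = (\<lambda>p. ?q (SOME x. x \<in> carrier ?F \<and> \<psi> x = p))"
    have hFm: "hom ar ?P ?A Fm" and Fm: "\<And>x. x \<in> carrier ?F \<Longrightarrow> Fm (\<psi> x) = ?q x"
    proof -
      have k: "?q x = ?q y" if "x \<in> carrier ?F" "y \<in> carrier ?F" "\<psi> x = \<psi> y" for x y
        using psi_q that by blast
      show "hom ar ?P ?A Fm" unfolding Fm_def by (rule factor(1)[OF hpsi hq algF k])
      show "\<And>x. x \<in> carrier ?F \<Longrightarrow> Fm (\<psi> x) = ?q x" unfolding Fm_def by (rule factor(2)[OF hpsi hq algF k])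
    qed
    \<comment> \<open>lifting k from the free algebra over Y' to Fz\<close>
    define pick where "pick = (\<lambda>y. SOME x. x \<in> carrier ?F \<and> ?q x = j (fclass ar Eqs Y' (Var y)))"
    have pick: "pick y \<in> carrier ?F \<and> ?q (pick y) = j (fclass ar Eqs Y' (Var y))" if "y \<in> Y'" for y
    proof -
      have "fclass ar Eqs Y' (Var y) \<in> carrier (free_alg ar Eqs Y')"
        using that by (simp add: carrier_free[OF var] Var_FT[OF var])
      then have "j (fclass ar Eqs Y' (Var y)) \<in> carrier ?A" using hj unfolding hom_def by auto
      then obtain x where "x \<in> carrier ?F" "j (fclass ar Eqs Y' (Var y)) = ?q x"
        by (auto simp: quot_alg_def elim!: quotientE)
      then have "\<exists>x. x \<in> carrier ?F \<and> ?q x = j (fclass ar Eqs Y' (Var y))" by metis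
      then show ?thesis unfolding pick_def by (rule someI_ex)
    qed
    define \<sigma>k where "\<sigma>k = (\<lambda>y. if y \<in> Y' then (SOME s. s \<in> pick y) else Var ())"
    have \<sigma>k: "\<sigma>k y \<in> FT ar (UNIV :: unit set) \<and> fclass ar Eqs UNIV (\<sigma>k y) = pick y" if "y \<in> Y'" for y
    proof -
      have "pick y \<in> carrier (free_alg ar Eqs UNIV)" using pick[OF that] by (simp add: Fz_def)
      then show ?thesis using some_in_class(2,3)[OF var, of "pick y" UNIV] that unfolding \<sigma>k_def by simp
    qed
    have \<sigma>kwf: "wf_trm ar (\<sigma>k y)" for y
      using \<sigma>k[of y] unfolding \<sigma>k_def by (cases "y \<in> Y'") (auto simp: free_terms_def)
    define kk where "kk = substH ar Eqs (UNIV :: unit set) \<sigma>k"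
    have hk: "hom ar (free_alg ar Eqs Y') ?F kk"
      unfolding kk_def Fz_def using \<sigma>k \<sigma>kwf by (intro substH_hom[OF var]) auto
    have qk: "?q (kk w) = j w" if "w \<in> carrier (free_alg ar Eqs Y')" for w
    proof (rule free_hom_unique[OF var _ hj _ that])
      show "hom ar (free_alg ar Eqs Y') ?A (\<lambda>w. ?q (kk w))" by (rule hom_comp[OF hk hq])
      fix y assume y: "y \<in> Y'"
      have "kk (fclass ar Eqs Y' (Var y)) = fclass ar Eqs UNIV (\<sigma>k y)"
        unfolding kk_def using \<sigma>k \<sigma>kwf y by (simp add: substH_fclass[OF var] Var_FT[OF var])
      also have "\<dots> = pick y" using \<sigma>k[OF y] by simp
      finally show "?q (kk (fclass ar Eqs Y' (Var y))) = j (fclass ar Eqs Y' (Var y))"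
        using pick[OF y] by simp
    qed
    \<comment> \<open>renaming between Fz and the free algebra on one generator of the required type\<close>
    let ?Y1 = "{{}} :: ('f, nat) trm set set"
    define \<rho> where "\<rho> = substH ar Eqs (UNIV :: unit set) (\<lambda>_::('f, nat) trm set. Var ())"
    define \<rho>' where "\<rho>' = substH ar Eqs ?Y1 (\<lambda>_::unit. Var {})"
    have h\<rho>: "hom ar (free_alg ar Eqs ?Y1) ?F \<rho>"
      unfolding \<rho>_def Fz_def by (intro substH_hom[OF var]) (auto simp: Var_FT[OF var])
    have h\<rho>': "hom ar ?F (free_alg ar Eqs ?Y1) \<rho>'"
      unfolding \<rho>'_def Fz_def by (intro substH_hom[OF var]) (auto simp: Var_FT[OF var])
    have \<rho>\<rho>': "\<rho> (\<rho>' x) = x" if xF: "x \<in> carrier ?F" for x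
    proof -
      obtain s where s: "s \<in> FT ar (UNIV :: unit set)" "x = fclass ar Eqs UNIV s"
        using xF by (auto simp: Fz_def carrier_free[OF var])
      have s1: "subst (\<lambda>_::unit. Var ({} :: ('f, nat) trm set)) s \<in> FT ar ?Y1"
        using s by (intro subst_FT) (auto simp: Var_FT[OF var])
      have "\<rho>' x = fclass ar Eqs ?Y1 (subst (\<lambda>_. Var {}) s)"
        unfolding \<rho>'_def using s by (simp add: substH_fclass[OF var] Var_FT[OF var])
      then have "\<rho> (\<rho>' x) = fclass ar Eqs UNIV (subst (\<lambda>_. Var ()) (subst (\<lambda>_::unit. Var ({} :: ('f, nat) trm set)) s))"
        unfolding \<rho>_def using s1 by (simp add: substH_fclass[OF var] Var_FT[OF var])
      also have "subst (\<lambda>_. Var ()) (subst (\<lambda>_::unit. Var ({} :: ('f, nat) trm set)) s) = subst Var s"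
        by (simp add: subst_subst)
      finally show ?thesis using s by (simp add: subst_Var)
    qed
    have projP: "projective ar Eqs ?P"
      unfolding projective_def
    proof (intro conjI exI)
      show "algebra ar ?P" by (rule algP)
      show "hom ar ?P (free_alg ar Eqs ?Y1) (\<lambda>p. \<rho>' (kk (i (Fm p))))"
        by (rule hom_comp[OF hom_comp[OF hom_comp[OF hFm hi] hk] h\<rho>'])
      show "hom ar (free_alg ar Eqs ?Y1) ?P (\<lambda>w. \<psi> (\<rho> w))"
        by (rule hom_comp[OF h\<rho> hpP])
      show "\<forall>p\<in>carrier ?P. \<psi> (\<rho> (\<rho>' (kk (i (Fm p))))) = p"
      proof
        fix p assume "p \<in> carrier ?P"
        then obtain x where x: "x \<in> carrier ?F" "p = \<psi> x" by (auto simp: subalg_def)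
        have qx: "?q x \<in> carrier ?A" using hq x unfolding hom_def by auto
        have iq: "i (?q x) \<in> carrier (free_alg ar Eqs Y')" using hi qx unfolding hom_def by auto
        define w where "w = kk (i (?q x))"
        have wc: "w \<in> carrier ?F" unfolding w_def using hk iq unfolding hom_def by auto
        have "?q w = ?q x" unfolding w_def using qk[OF iq] ji qx by simp
        then have "\<psi> w = \<psi> x" using psi_q[OF wc x(1)] by simp
        then show "\<psi> (\<rho> (\<rho>' (kk (i (Fm p))))) = p"
          using x Fm[OF x(1)] \<rho>\<rho>'[OF wc] unfolding w_def by simp
      qed
    qed
    have fgP: "fin_gen ar ?P"
      unfolding fin_gen_def
    proof (intro exI conjI)
      show "finite {\<psi> ?z}" by simp
      show "{\<psi> ?z} \<subseteq> carrier ?P" using zc by (auto simp: subalg_def)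
      show "Sg ar ?P {\<psi> ?z} = carrier ?P" using Sg_img(2)[OF var hpsi] by (simp add: subalg_def)
    qed
    have "solution ar Eqs m E h \<psi> ?P"
      unfolding solution_def
    proof (intro conjI exI)
      show "fin_gen ar ?P" by (rule fgP)
      show "projective ar Eqs ?P" by (rule projP)
      show "hom ar ?F ?P \<psi>" by (rule hpP)
      show "hom ar ?P (prod_alg m E) (\<lambda>p. h (SOME x. x \<in> carrier ?F \<and> \<psi> x = p))" by (rule hfac)
      show "\<forall>x\<in>carrier ?F. h (SOME x'. x' \<in> carrier ?F \<and> \<psi> x' = \<psi> x) = h x" using fac by blast
    qed
    then show ?thesis using kth unfolding G_congs_def by blast
  qed
  show ?thesis using part1 part2 by blast
qed

end
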